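(* Let $G$ be a compact abelian group with discrete dual group $\Gamma$ and let $a, b \in \mathbb{N}$ be coprime. A subset $E \subset \Gamma$ is $(ab)$-PR if and only if $E$ is both $a$-PR and $b$-PR.
   Context: Characters are written multiplicatively; $\mathbb{Z}_N$ is identified with the $N$-th roots of unity in the unit circle $\mathbb{T}$. For $N \in \mathbb{N}$, a subset $E \subset \Gamma$ is $N$-PR if for every function $\varphi: E \to \mathbb{Z}_N$ there exists $x \in G$ with $\varphi(\gamma) = \gamma(x)$ for all $\gamma \in E$. *)

theory Defs
  imports "HOL-Analysis.Analysis"
begin

definition dual_group :: "('g::{topological_space, ab_group_add} \<Rightarrow> complex) set" where
  "dual_group = {chi. continuous_on UNIV chi \<and> (\<forall>x. norm (chi x) = 1) \<and>
                      (\<forall>x y. chi (x + y) = chi x * chi y)}"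

text \<open>Z_N identified with the N-th roots of unity in the unit circle.\<close>
definition roots_of_unity :: "nat \<Rightarrow> complex set" where
  "roots_of_unity N = {z. z ^ N = 1}"

definition N_PR :: "nat \<Rightarrow> ('g \<Rightarrow> complex) set \<Rightarrow> bool" where
  "N_PR N E \<longleftrightarrow> (\<forall>\<phi>. (\<forall>\<gamma>\<in>E. \<phi> \<gamma> \<in> roots_of_unity N) \<longrightarrow>
                       (\<exists>x::'g. \<forall>\<gamma>\<in>E. \<phi> \<gamma> = \<gamma> x))"

end

theory Submission
  imports Defs
begin

lemma split_root:
  fixes z :: complex and a b x y :: nat
  assumes "z ^ (a * b) = 1" and "a * x = b * y + 1" and "b > 0"
  shows "(z ^ (a * x)) ^ b = 1" and "(inverse (z ^ (b * y))) ^ a = 1"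
    and "z = z ^ (a * x) * inverse (z ^ (b * y))"
proof -
  have nz: "z \<noteq> 0" proof
    assume "z = 0"
    moreover have "a * b > 0" using assms(2,3) by (cases a) auto
    ultimately have "z ^ (a * b) = 0" by (simp add: zero_power)
    thus False using assms(1) by simp
  qed
  have "(z ^ (a * x)) ^ b = (z ^ (a * b)) ^ x"
    by (simp add: power_mult[symmetric] mult_ac)
  thus "(z ^ (a * x)) ^ b = 1" using assms(1) by simp
  have "(inverse (z ^ (b * y))) ^ a = inverse ((z ^ (a * b)) ^ y)"
    by (simp add: power_inverse power_mult[symmetric] mult_ac)
  thus "(inverse (z ^ (b * y))) ^ a = 1" using assms(1) by simp
  have "z ^ (a * x) = z ^ (b * y) * z" using assms(2) by (simp add: power_add)
  thus "z = z ^ (a * x) * inverse (z ^ (b * y))" using nz by (simp add: field_simps)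
qed

theorem corollary2p5:
  fixes E :: "('g::{topological_group_add, ab_group_add, t2_space} \<Rightarrow> complex) set"
    and a b :: nat
  assumes "compact (UNIV :: 'g set)"
    and "E \<subseteq> dual_group"
    and "a > 0" and "b > 0" and "coprime a b"
  shows "N_PR (a * b) E \<longleftrightarrow> N_PR a E \<and> N_PR b E"
proof
  assume H: "N_PR (a * b) E"
  have "N_PR n E" if "n = a \<or> n = b" for n
    unfolding N_PR_def
  proof (intro allI impI)
    fix \<phi> :: "('g \<Rightarrow> complex) \<Rightarrow> complex"
    assume "\<forall>\<gamma>\<in>E. \<phi> \<gamma> \<in> roots_of_unity n"
    hence "\<forall>\<gamma>\<in>E. \<phi> \<gamma> \<in> roots_of_unity (a * b)"
      using that unfolding roots_of_unity_def
      by (auto simp: power_mult) (metis power_mult mult.commute power_one)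
    thus "\<exists>x::'g. \<forall>\<gamma>\<in>E. \<phi> \<gamma> = \<gamma> x" using H unfolding N_PR_def by blast
  qed
  thus "N_PR a E \<and> N_PR b E" by blast
next
  assume H: "N_PR a E \<and> N_PR b E"
  obtain x y :: nat where xy: "a * x = b * y + gcd a b"
    using bezout_nat[of a b] assms(3) by auto
  hence xy: "a * x = b * y + 1" using assms(5) by simp
  show "N_PR (a * b) E"
    unfolding N_PR_def
  proof (intro allI impI)
    fix \<phi> :: "('g \<Rightarrow> complex) \<Rightarrow> complex"
    assume P: "\<forall>\<gamma>\<in>E. \<phi> \<gamma> \<in> roots_of_unity (a * b)"
    have "\<forall>\<gamma>\<in>E. (\<lambda>\<gamma>. inverse (\<phi> \<gamma> ^ (b * y))) \<gamma> \<in> roots_of_unity a"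
      using P split_root(2)[OF _ xy assms(4)] unfolding roots_of_unity_def by auto
    then obtain x1 :: 'g where x1: "\<forall>\<gamma>\<in>E. inverse (\<phi> \<gamma> ^ (b * y)) = \<gamma> x1"
      using conjunct1[OF H, unfolded N_PR_def, rule_format, of "\<lambda>\<gamma>. inverse (\<phi> \<gamma> ^ (b * y))"] by blast
    have "\<forall>\<gamma>\<in>E. (\<lambda>\<gamma>. \<phi> \<gamma> ^ (a * x)) \<gamma> \<in> roots_of_unity b"
      using P split_root(1)[OF _ xy assms(4)] unfolding roots_of_unity_def by auto
    then obtain x2 :: 'g where x2: "\<forall>\<gamma>\<in>E. \<phi> \<gamma> ^ (a * x) = \<gamma> x2"
      using conjunct2[OF H, unfolded N_PR_def, rule_format, of "\<lambda>\<gamma>. \<phi> \<gamma> ^ (a * x)"] by blast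
    show "\<exists>x::'g. \<forall>\<gamma>\<in>E. \<phi> \<gamma> = \<gamma> x"
    proof (intro exI ballI)
      fix \<gamma> assume g: "\<gamma> \<in> E"
      hence hom: "\<gamma> (x2 + x1) = \<gamma> x2 * \<gamma> x1"
        using assms(2) unfolding dual_group_def by blast
      have "\<phi> \<gamma> = \<phi> \<gamma> ^ (a * x) * inverse (\<phi> \<gamma> ^ (b * y))"
        using P g split_root(3)[OF _ xy assms(4)] unfolding roots_of_unity_def by auto
      thus "\<phi> \<gamma> = \<gamma> (x2 + x1)" using hom x1 x2 g by simp
    qed
  qed
qed

end
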